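(* Let $G_1$ be an $r_1$-regular finite simple graph and $G_2$ an $r_2$-regular finite simple graph with $r_1>r_2$, and let $p_i=|V(G_i)|$, $q_i=|E(G_i)|$ for $i=1,2$. Then $$\nu^*(G_1\sqcup G_2)=\nu^*(G_1)+\nu^*(G_2)+2q_1(p_2+q_2),$$ where $\sqcup$ denotes disjoint union.
   Context: For a finite simple graph $G=(V,E)$ with $\ell=|V|+|E|$, a construction sequence (c-sequence) is a bijection $x:\{1,\dots,\ell\}\to V\sqcup E$ such that every edge $e=uw$ satisfies $x^{-1}(e)>\max\{x^{-1}(u),x^{-1}(w)\}$. The cost of $x$ is $\nu(x)=\sum_{e=uw\in E}\big(2x^{-1}(e)-x^{-1}(u)-x^{-1}(w)\big)$, and $\nu^*(G)$ is the maximum of $\nu(x)$ over all c-sequences for $G$. *)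

theory Defs
  imports Main
begin

definition simple_graph :: "'a set \<Rightarrow> 'a set set \<Rightarrow> bool" where
  "simple_graph V E \<longleftrightarrow> finite V \<and>
     (\<forall>e\<in>E. \<exists>u v. u \<in> V \<and> v \<in> V \<and> u \<noteq> v \<and> e = {u, v})"

definition regular :: "'a set \<Rightarrow> 'a set set \<Rightarrow> nat \<Rightarrow> bool" where
  "regular V E r \<longleftrightarrow> (\<forall>v\<in>V. card {e\<in>E. v \<in> e} = r)"

definition elems :: "'a set \<Rightarrow> 'a set set \<Rightarrow> ('a + 'a set) set" where
  "elems V E = Inl ` V \<union> Inr ` E"

definition cseq :: "'a set \<Rightarrow> 'a set set \<Rightarrow> (nat \<Rightarrow> 'a + 'a set) \<Rightarrow> bool" where
  "cseq V E x \<longleftrightarrow> bij_betw x {1..card V + card E} (elems V E) \<and>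
     (\<forall>e\<in>E. \<forall>u\<in>e. inv_into {1..card V + card E} x (Inl u)
                    < inv_into {1..card V + card E} x (Inr e))"

definition cost :: "'a set \<Rightarrow> 'a set set \<Rightarrow> (nat \<Rightarrow> 'a + 'a set) \<Rightarrow> int" where
  "cost V E x = (let pos = inv_into {1..card V + card E} x in
     (\<Sum>e\<in>E. 2 * int (pos (Inr e)) - (\<Sum>u\<in>e. int (pos (Inl u)))))"

definition nu_star :: "'a set \<Rightarrow> 'a set set \<Rightarrow> int" where
  "nu_star V E = Max {cost V E x | x. cseq V E x}"

definition du_V :: "'a set \<Rightarrow> 'b set \<Rightarrow> ('a + 'b) set" where
  "du_V V1 V2 = Inl ` V1 \<union> Inr ` V2"

definition du_E :: "'a set set \<Rightarrow> 'b set set \<Rightarrow> ('a + 'b) set set" where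
  "du_E E1 E2 = (\<lambda>e. Inl ` e) ` E1 \<union> (\<lambda>e. Inr ` e) ` E2"

end

theory Submission
  imports Defs
begin

lemma edgeE:
  assumes "simple_graph V E" "e \<in> E"
  obtains u v where "u \<in> V" "v \<in> V" "u \<noteq> v" "e = {u, v}"
proof -
  have "\<forall>e\<in>E. \<exists>u v. u \<in> V \<and> v \<in> V \<and> u \<noteq> v \<and> e = {u, v}"
    using assms(1) unfolding simple_graph_def by (rule conjunct2)
  then have "\<exists>u v. u \<in> V \<and> v \<in> V \<and> u \<noteq> v \<and> e = {u, v}" using assms(2) by (rule bspec)
  then show ?thesis using that by (elim exE conjE)
qed

lemma finV: "simple_graph V E \<Longrightarrow> finite V"
  unfolding simple_graph_def by (rule conjunct1)

lemma edge_sub: "simple_graph V E \<Longrightarrow> e \<in> E \<Longrightarrow> e \<subseteq> V"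
proof -
  assume a: "simple_graph V E" "e \<in> E"
  obtain u v where "u \<in> V" "v \<in> V" "u \<noteq> v" "e = {u, v}" using a by (rule edgeE)
  then show "e \<subseteq> V" by simp
qed


lemma gauss2: "2 * \<Sum>{1..n::nat} = n * (n + 1)"
  by (induction n) (auto simp: atLeastAtMostSuc_conv)

lemma sum_lower:
  fixes A :: "nat set"
  assumes "finite A" "0 \<notin> A"
  shows "card A * (card A + 1) \<le> 2 * \<Sum>A"
  using assms
proof (induction "card A" arbitrary: A)
  case 0
  then show ?case by simp
next
  case (Suc m)
  have cA: "card A = Suc m" using Suc.hyps(2) by simp
  have fA: "finite A" and nz: "0 \<notin> A" using Suc.prems by auto
  have ne: "A \<noteq> {}" using cA by auto
  define a where "a = Max A"
  have aA: "a \<in> A" unfolding a_def using fA ne by (rule Max_in)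
  have sub: "A \<subseteq> {1..a}"
  proof
    fix x assume xA: "x \<in> A"
    have "x \<le> a" unfolding a_def using fA xA by (rule Max_ge)
    moreover have "x \<noteq> 0" using xA nz by metis
    ultimately show "x \<in> {1..a}" by simp
  qed
  have "card A \<le> card {1..a}" using sub by (rule card_mono[rotated]) simp
  then have le: "Suc m \<le> a" using cA by simp
  have c': "m = card (A - {a})" using cA aA fA by simp
  have IH: "m * (m+1) \<le> 2 * \<Sum>(A - {a})"
    using Suc.hyps(1)[OF c'] fA nz unfolding c'[symmetric] by simp
  have s: "\<Sum>A = a + \<Sum>(A - {a})" using fA aA by (rule sum.remove)
  have e: "Suc m * (Suc m + 1) = m * (m + 1) + 2 * Suc m" by simp
  show ?case unfolding cA e s using add_le_mono[OF IH, of "2 * Suc m" "2 * a"] le by simp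
qed

lemma sum_upper:
  fixes A :: "nat set"
  assumes "A \<subseteq> {1..N}"
  shows "2 * \<Sum>A + (N - card A) * (N - card A + 1) \<le> N * (N + 1)"
proof -
  define B where "B = {1..N} - A"
  have fA: "finite A" using assms finite_subset by blast
  have cB: "card B = N - card A" unfolding B_def using assms
    by (simp add: card_Diff_subset fA)
  have "card B * (card B + 1) \<le> 2 * \<Sum>B" by (rule sum_lower) (auto simp: B_def)
  moreover have "\<Sum>A + \<Sum>B = \<Sum>{1..N}" unfolding B_def
    using sum.subset_diff[OF assms finite_atLeastAtMost, of id] by simp
  ultimately show ?thesis using gauss2[of N] unfolding cB[symmetric] by linarith
qed

lemma finE: "simple_graph V E \<Longrightarrow> finite E"
  by (rule finite_subset[of E "Pow V"]) (auto dest: edge_sub finV)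

lemma double_count:
  assumes "simple_graph V E"
  shows "(\<Sum>e\<in>E. \<Sum>u\<in>e. f u) = (\<Sum>v\<in>V. of_nat (card {e\<in>E. v \<in> e}) * (f v :: int))"
proof -
  have fV: "finite V" using assms by (rule finV)
  have sub: "\<And>e. e \<in> E \<Longrightarrow> {v. v \<in> V \<and> v \<in> e} = e" using edge_sub[OF assms] by blast
  have "(\<Sum>e\<in>E. \<Sum>u\<in>e. f u) = (\<Sum>e\<in>E. \<Sum>u\<in>{v. v \<in> V \<and> v \<in> e}. f u)"
    using sub by simp
  also have "\<dots> = (\<Sum>v\<in>V. \<Sum>e\<in>{e. e \<in> E \<and> v \<in> e}. f v)"
    by (rule sum.swap_restrict[OF finE[OF assms] fV])
  also have "\<dots> = (\<Sum>v\<in>V. of_nat (card {e\<in>E. v \<in> e}) * f v)" by simp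
  finally show ?thesis .
qed

lemma handshake:
  assumes "simple_graph V E"
  shows "(\<Sum>v\<in>V. int (card {e\<in>E. v \<in> e})) = 2 * int (card E)"
proof -
  have c2: "(\<Sum>u\<in>e. (1::int)) = 2" if eE: "e \<in> E" for e
  proof -
    obtain u v where "u \<in> V" "v \<in> V" "u \<noteq> v" "e = {u, v}" using assms eE by (rule edgeE)
    then show ?thesis by simp
  qed
  have "(\<Sum>e\<in>E. \<Sum>u\<in>e. (1::int)) = (\<Sum>e\<in>E. 2)" by (rule sum.cong) (auto simp only: c2)
  also have "\<dots> = 2 * int (card E)" by simp
  finally have "(\<Sum>e\<in>E. \<Sum>u\<in>e. (1::int)) = 2 * int (card E)" .
  moreover have "(\<Sum>e\<in>E. \<Sum>u\<in>e. (1::int)) = (\<Sum>v\<in>V. int (card {e\<in>E. v \<in> e}))"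
    using double_count[OF assms, of "\<lambda>_. 1"] by simp
  ultimately show ?thesis by simp
qed

lemma cost_eq:
  assumes "simple_graph V E"
  shows "cost V E x = 2 * (\<Sum>e\<in>E. int (inv_into {1..card V + card E} x (Inr e)))
     - (\<Sum>v\<in>V. int (card {e\<in>E. v \<in> e}) * int (inv_into {1..card V + card E} x (Inl v)))"
  unfolding cost_def Let_def
  using double_count[OF assms, of "\<lambda>u. int (inv_into {1..card V + card E} x (Inl u))"]
  by (simp add: sum_subtractf sum_distrib_left)

lemma cseq_pos_bij:
  assumes "cseq V E x"
  shows "bij_betw (inv_into {1..card V + card E} x) (elems V E) {1..card V + card E}"
  using assms unfolding cseq_def by (simp add: bij_betw_inv_into)

lemma cseq_bounds:
  assumes g: "simple_graph V E" and c: "cseq V E x" and W: "W \<subseteq> V"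
  defines "N \<equiv> card V + card E"
  defines "pos \<equiv> inv_into {1..N} x"
  shows "card W * (card W + 1) \<le> 2 * (\<Sum>v\<in>W. pos (Inl v))"
    and "2 * (\<Sum>e\<in>E. pos (Inr e)) + card V * (card V + 1) \<le> N * (N + 1)"
proof -
  have fV: "finite V" using g by (rule finV)
  have fE: "finite E" using finE[OF g] .
  have b: "bij_betw pos (elems V E) {1..N}" using cseq_pos_bij[OF c] unfolding pos_def N_def .
  have inj: "inj_on pos (elems V E)" using b by (simp add: bij_betw_def)
  have img: "pos ` elems V E = {1..N}" using b by (simp add: bij_betw_def)
  have eW: "Inl ` W \<subseteq> elems V E" using W unfolding elems_def by blast
  have eE: "Inr ` E \<subseteq> elems V E" unfolding elems_def by blast
  have injW: "inj_on (pos \<circ> Inl) W"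
    by (rule comp_inj_on) (simp_all add: inj_on_subset[OF inj eW])
  have injE: "inj_on (pos \<circ> Inr) E"
    by (rule comp_inj_on) (simp_all add: inj_on_subset[OF inj eE])
  have subW: "(pos \<circ> Inl) ` W \<subseteq> {1..N}"
    unfolding image_comp[symmetric] img[symmetric] using eW by (rule image_mono)
  have subE: "(pos \<circ> Inr) ` E \<subseteq> {1..N}"
    unfolding image_comp[symmetric] img[symmetric] using eE by (rule image_mono)
  have sW: "(\<Sum>v\<in>W. pos (Inl v)) = \<Sum>((pos \<circ> Inl) ` W)"
    using sum.reindex[OF injW, of id] by simp
  have cW: "card ((pos \<circ> Inl) ` W) = card W" using card_image[OF injW] .
  have fW: "finite ((pos \<circ> Inl) ` W)" using W fV finite_subset by blast
  show "card W * (card W + 1) \<le> 2 * (\<Sum>v\<in>W. pos (Inl v))"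
  proof -
    have "0 \<notin> (pos \<circ> Inl) ` W" using subW by auto
    from sum_lower[OF fW this] show ?thesis unfolding sW cW .
  qed
  have sE: "(\<Sum>e\<in>E. pos (Inr e)) = \<Sum>((pos \<circ> Inr) ` E)"
    using sum.reindex[OF injE, of id] by simp
  have cE: "card ((pos \<circ> Inr) ` E) = card E" using card_image[OF injE] .
  have "N - card E = card V" unfolding N_def by simp
  then show "2 * (\<Sum>e\<in>E. pos (Inr e)) + card V * (card V + 1) \<le> N * (N + 1)"
    using sum_upper[OF subE] unfolding sE cE by simp
qed

lemma cost_nonneg:
  assumes g: "simple_graph V E" and c: "cseq V E x"
  shows "0 \<le> cost V E x"
  unfolding cost_def Let_def
proof (rule sum_nonneg)
  fix e assume e: "e \<in> E"
  let ?p = "inv_into {1..card V + card E} x"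
  obtain u w where uw: "u \<in> V" "w \<in> V" "u \<noteq> w" "e = {u, w}" using g e by (rule edgeE)
  have "?p (Inl u) < ?p (Inr e)" "?p (Inl w) < ?p (Inr e)"
  proof -
    have all: "\<forall>e\<in>E. \<forall>u\<in>e. ?p (Inl u) < ?p (Inr e)" using c unfolding cseq_def by (rule conjunct2)
    show "?p (Inl u) < ?p (Inr e)" "?p (Inl w) < ?p (Inr e)" using all e uw(4) by simp_all
  qed
  then show "0 \<le> 2 * int (?p (Inr e)) - (\<Sum>u\<in>e. int (?p (Inl u)))"
    using uw by simp
qed

lemma nu_star_eqI:
  assumes g: "simple_graph V E" and c0: "cseq V E x0"
    and le: "\<And>x. cseq V E x \<Longrightarrow> cost V E x \<le> cost V E x0"
  shows "nu_star V E = cost V E x0"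
  unfolding nu_star_def
proof (rule Max_eqI)
  show "finite {cost V E x |x. cseq V E x}"
    by (rule finite_subset[of _ "{0..cost V E x0}"]) (auto intro: cost_nonneg[OF g] le)
qed (use c0 le in auto)

lemma ext_bij:
  assumes g: "bij_betw g A {1..card A}" and fB: "finite B" and d: "A \<inter> B = {}"
  obtains f where "bij_betw f (A \<union> B) {1..card A + card B}" "\<forall>a\<in>A. f a = g a"
           "bij_betw f B {card A + 1..card A + card B}"
proof -
  obtain h where h: "bij_betw h B {0..<card B}" using ex_bij_betw_finite_nat[OF fB] by blast
  define f where "f z = (if z \<in> A then g z else card A + 1 + h z)" for z
  have fB': "bij_betw f B {card A + 1..card A + card B}"
  proof -
    have "bij_betw (\<lambda>z. card A + 1 + h z) B {card A + 1..card A + card B}"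
    proof -
      have "bij_betw (\<lambda>i. card A + 1 + i) {0..<card B} {card A + 1..card A + card B}"
        unfolding bij_betw_def
      proof
        show "inj_on (\<lambda>i. card A + 1 + i) {0..<card B}" by (auto simp: inj_on_def)
        show "(\<lambda>i. card A + 1 + i) ` {0..<card B} = {card A + 1..card A + card B}"
        proof
          show "(\<lambda>i. card A + 1 + i) ` {0..<card B} \<subseteq> {card A + 1..card A + card B}" by auto
          show "{card A + 1..card A + card B} \<subseteq> (\<lambda>i. card A + 1 + i) ` {0..<card B}"
          proof
            fix y assume "y \<in> {card A + 1..card A + card B}"
            then show "y \<in> (\<lambda>i. card A + 1 + i) ` {0..<card B}"
              by (intro image_eqI[of _ _ "y - (card A + 1)"]) auto
          qed
        qed
      qed
      then show ?thesis using bij_betw_trans[OF h] by (simp add: comp_def)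
    qed
    then show ?thesis by (rule bij_betw_cong[THEN iffD1, rotated]) (use d in \<open>auto simp: f_def\<close>)
  qed
  have fA: "bij_betw f A {1..card A}" using g by (rule bij_betw_cong[THEN iffD1, rotated]) (auto simp: f_def)
  have "bij_betw f (A \<union> B) ({1..card A} \<union> {card A + 1..card A + card B})"
    by (rule bij_betw_combine[OF fA fB']) auto
  moreover have "{1..card A} \<union> {card A + 1..card A + card B} = {1..card A + card B}" by auto
  ultimately have "bij_betw f (A \<union> B) {1..card A + card B}" by simp
  moreover have "\<forall>a\<in>A. f a = g a" by (simp add: f_def)
  ultimately show ?thesis using fB' that by blast
qed

lemma gauss_split: "2 * \<Sum>{p+1..p+q::nat} + p * (p + 1) = (p+q) * (p+q+1)"
proof -
  have "{1..p+q} = {1..p} \<union> {p+1..p+q}" by auto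
  then have "\<Sum>{1..p+q} = \<Sum>{1..p} + \<Sum>{p+1..p+q}"
    by (simp add: sum.union_disjoint)
  then show ?thesis using gauss2[of p] gauss2[of "p+q"] by linarith
qed

lemma cseq_exists:
  assumes g: "simple_graph V E" and W: "W \<subseteq> V"
  shows "\<exists>x. cseq V E x
     \<and> 2 * (\<Sum>v\<in>W. inv_into {1..card V + card E} x (Inl v)) = card W * (card W + 1)
     \<and> 2 * (\<Sum>v\<in>V. inv_into {1..card V + card E} x (Inl v)) = card V * (card V + 1)
     \<and> 2 * (\<Sum>e\<in>E. inv_into {1..card V + card E} x (Inr e)) + card V * (card V + 1)
         = (card V + card E) * (card V + card E + 1)"
proof -
  have fV: "finite V" using g by (rule finV)
  have fE: "finite E" using finE[OF g] .
  define A1 where "A1 = (Inl ` W :: ('a + 'a set) set)"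
  define A2 where "A2 = (Inl ` (V - W) :: ('a + 'a set) set)"
  define A3 where "A3 = (Inr ` E :: ('a + 'a set) set)"
  have fW: "finite W" using W fV finite_subset by blast
  have c1: "card A1 = card W" unfolding A1_def by (simp add: card_image)
  have c12: "card (A1 \<union> A2) = card V"
  proof -
    have "A1 \<union> A2 = Inl ` V" unfolding A1_def A2_def using W by auto
    then show ?thesis by (simp add: card_image)
  qed
  have c3: "card A3 = card E" unfolding A3_def by (simp add: card_image)
  have e: "elems V E = (A1 \<union> A2) \<union> A3" unfolding elems_def A1_def A2_def A3_def using W by auto
  have "bij_betw (\<lambda>z. 0::nat) ({}::('a + 'a set) set) {1..card ({}::('a + 'a set) set)}" by (simp add: bij_betw_def)
  moreover have "finite A1" unfolding A1_def using fW by simp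
  moreover have "{} \<inter> A1 = {}" by simp
  ultimately obtain f1' where f1': "bij_betw f1' ({} \<union> A1) {1..card ({}::('a + 'a set) set) + card A1}"
    by (rule ext_bij)
  define f1 where "f1 = f1'"
  have f1: "bij_betw f1 A1 {1..card A1}" using f1' unfolding f1_def by simp
  have "finite A2" unfolding A2_def using fV by simp
  moreover have "A1 \<inter> A2 = {}" unfolding A1_def A2_def by auto
  ultimately obtain f2 where
    f2: "bij_betw f2 (A1 \<union> A2) {1..card A1 + card A2}" "\<forall>a\<in>A1. f2 a = f1 a"
    using ext_bij[OF f1] by blast
  have f2': "bij_betw f2 (A1 \<union> A2) {1..card (A1 \<union> A2)}"
  proof -
    have "card (A1 \<union> A2) = card A1 + card A2"
      by (rule card_Un_disjoint) (auto simp: A1_def A2_def fW fV)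
    then show ?thesis using f2(1) by simp
  qed
  have "finite A3" unfolding A3_def using fE by simp
  moreover have "(A1 \<union> A2) \<inter> A3 = {}" unfolding A1_def A2_def A3_def by auto
  ultimately obtain f3 where
    f3: "bij_betw f3 (A1 \<union> A2 \<union> A3) {1..card (A1 \<union> A2) + card A3}"
      "\<forall>a\<in>A1 \<union> A2. f3 a = f2 a" "bij_betw f3 A3 {card (A1 \<union> A2) + 1..card (A1 \<union> A2) + card A3}"
    using ext_bij[OF f2'] by blast
  let ?N = "card V + card E"
  have f3e: "bij_betw f3 (elems V E) {1..?N}" using f3(1) unfolding e c12 c3 .
  define x where "x = inv_into (elems V E) f3"
  have xb: "bij_betw x {1..?N} (elems V E)" unfolding x_def using f3e by (rule bij_betw_inv_into)
  have pos: "inv_into {1..?N} x z = f3 z" if "z \<in> elems V E" for z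
    unfolding x_def using inv_into_inv_into_eq[OF f3e that] .
  have sW: "(\<Sum>v\<in>W. inv_into {1..?N} x (Inl v)) = \<Sum>{1..card W}"
  proof -
    have "(\<Sum>v\<in>W. inv_into {1..?N} x (Inl v)) = (\<Sum>v\<in>W. f1 (Inl v))"
      using pos f3(2) f2(2) W unfolding elems_def A1_def by (intro sum.cong) auto
    also have "\<dots> = (\<Sum>z\<in>A1. f1 z)" unfolding A1_def by (simp add: sum.reindex)
    also have "\<dots> = \<Sum>{1..card A1}" using sum.reindex_bij_betw[OF f1, of id] by simp
    finally show ?thesis unfolding c1 .
  qed
  have sV: "(\<Sum>v\<in>V. inv_into {1..?N} x (Inl v)) = \<Sum>{1..card V}"
  proof -
    have "(\<Sum>v\<in>V. inv_into {1..?N} x (Inl v)) = (\<Sum>v\<in>V. f2 (Inl v))"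
      using pos f3(2) W unfolding elems_def A1_def A2_def by (intro sum.cong) auto
    also have "\<dots> = (\<Sum>z\<in>Inl ` V. f2 z)" by (simp add: sum.reindex)
    also have "Inl ` V = A1 \<union> A2" unfolding A1_def A2_def using W by auto
    also have "(\<Sum>z\<in>A1 \<union> A2. f2 z) = \<Sum>{1..card (A1 \<union> A2)}"
      using sum.reindex_bij_betw[OF f2', of id] by simp
    finally show ?thesis unfolding c12 .
  qed
  have sE: "(\<Sum>e\<in>E. inv_into {1..?N} x (Inr e)) = \<Sum>{card V + 1..card V + card E}"
  proof -
    have "(\<Sum>e\<in>E. inv_into {1..?N} x (Inr e)) = (\<Sum>e\<in>E. f3 (Inr e))"
      using pos unfolding elems_def by (intro sum.cong) auto
    also have "\<dots> = (\<Sum>z\<in>A3. f3 z)" unfolding A3_def by (simp add: sum.reindex)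
    also have "\<dots> = \<Sum>{card (A1 \<union> A2) + 1..card (A1 \<union> A2) + card A3}"
      using sum.reindex_bij_betw[OF f3(3), of id] by simp
    finally show ?thesis unfolding c12 c3 .
  qed
  have cs: "cseq V E x"
    unfolding cseq_def
  proof (intro conjI xb ballI)
    fix e u assume eE: "e \<in> E" and u: "u \<in> e"
    have uV: "u \<in> V" using edge_sub[OF g eE] u by blast
    have "Inl u \<in> A1 \<union> A2" unfolding A1_def A2_def using uV by auto
    then have "f3 (Inl u) \<in> {1..card V}" using f2' f3(2) c12 by (auto simp: bij_betw_def)
    moreover have "f3 (Inr e) \<in> {card V + 1..card V + card E}" using f3(3) eE c12 c3
      unfolding A3_def by (auto simp: bij_betw_def)
    moreover have "Inl u \<in> elems V E" "Inr e \<in> elems V E" using uV eE unfolding elems_def by auto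
    ultimately show "inv_into {1..?N} x (Inl u) < inv_into {1..?N} x (Inr e)" using pos by auto
  qed
  show ?thesis
    by (intro exI[of _ x] conjI cs) (simp_all only: sW sV sE gauss2 gauss_split)
qed

lemma nu_star_two:
  assumes g: "simple_graph V E" and W: "W \<subseteq> V"
    and d1: "\<And>v. v \<in> W \<Longrightarrow> card {e\<in>E. v \<in> e} = r1"
    and d2: "\<And>v. v \<in> V - W \<Longrightarrow> card {e\<in>E. v \<in> e} = r2"
    and r: "r2 \<le> r1"
  shows "2 * nu_star V E = 2 * (int ((card V + card E) * (card V + card E + 1)) - int (card V * (card V + 1)))
     - (int r1 - int r2) * int (card W * (card W + 1)) - int r2 * int (card V * (card V + 1))"
proof -
  have fV: "finite V" using g by (rule finV)
  let ?N = "card V + card E"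
  define SE where "SE x = int (\<Sum>e\<in>E. inv_into {1..?N} x (Inr e))" for x :: "nat \<Rightarrow> 'a + 'a set"
  define SW where "SW x = int (\<Sum>v\<in>W. inv_into {1..?N} x (Inl v))" for x :: "nat \<Rightarrow> 'a + 'a set"
  define SV where "SV x = int (\<Sum>v\<in>V. inv_into {1..?N} x (Inl v))" for x :: "nat \<Rightarrow> 'a + 'a set"
  have ce: "cost V E x = 2 * SE x - (int r1 - int r2) * SW x - int r2 * SV x" for x
  proof -
    let ?p = "\<lambda>v. int (inv_into {1..?N} x (Inl v))"
    have "(\<Sum>v\<in>V. int (card {e\<in>E. v \<in> e}) * ?p v)
        = (\<Sum>v\<in>W. int (card {e\<in>E. v \<in> e}) * ?p v) + (\<Sum>v\<in>V - W. int (card {e\<in>E. v \<in> e}) * ?p v)"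
      using W fV by (metis (no_types, lifting) add.commute sum.subset_diff)
    also have "\<dots> = (\<Sum>v\<in>W. int r1 * ?p v) + (\<Sum>v\<in>V - W. int r2 * ?p v)"
      using d1 d2 by simp
    also have "\<dots> = (int r1 - int r2) * (\<Sum>v\<in>W. ?p v) + int r2 * ((\<Sum>v\<in>W. ?p v) + (\<Sum>v\<in>V - W. ?p v))"
      unfolding sum_distrib_left[symmetric] by (simp add: algebra_simps)
    also have "(\<Sum>v\<in>W. ?p v) + (\<Sum>v\<in>V - W. ?p v) = (\<Sum>v\<in>V. ?p v)"
      using W fV by (metis (no_types, lifting) add.commute sum.subset_diff)
    finally show ?thesis unfolding cost_eq[OF g] SE_def SW_def SV_def by simp
  qed
  define B where "B = 2 * (int (?N * (?N + 1)) - int (card V * (card V + 1)))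
     - (int r1 - int r2) * int (card W * (card W + 1)) - int r2 * int (card V * (card V + 1))"
  have up: "2 * cost V E x \<le> B" if c: "cseq V E x" for x
  proof -
    have a: "int (card W * (card W + 1)) \<le> 2 * SW x"
      using cseq_bounds(1)[OF g c W] unfolding SW_def by linarith
    have b: "int (card V * (card V + 1)) \<le> 2 * SV x"
      using cseq_bounds(1)[OF g c order_refl] unfolding SV_def by linarith
    have e: "2 * SE x + int (card V * (card V + 1)) \<le> int (?N * (?N + 1))"
      using cseq_bounds(2)[OF g c order_refl] unfolding SE_def by linarith
    have r0: "0 \<le> int r1 - int r2" using r by simp
    have "(int r1 - int r2) * int (card W * (card W + 1)) \<le> (int r1 - int r2) * (2 * SW x)"
      using mult_left_mono[OF a r0] .
    moreover have "int r2 * int (card V * (card V + 1)) \<le> int r2 * (2 * SV x)"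
      using mult_left_mono[OF b] by simp
    ultimately show ?thesis unfolding B_def ce using e by (simp add: algebra_simps)
  qed
  obtain x0 where x0: "cseq V E x0"
     "2 * (\<Sum>v\<in>W. inv_into {1..?N} x0 (Inl v)) = card W * (card W + 1)"
     "2 * (\<Sum>v\<in>V. inv_into {1..?N} x0 (Inl v)) = card V * (card V + 1)"
     "2 * (\<Sum>e\<in>E. inv_into {1..?N} x0 (Inr e)) + card V * (card V + 1) = ?N * (?N + 1)"
    using cseq_exists[OF g W] by blast
  have "2 * SW x0 = int (card W * (card W + 1))" using x0(2) unfolding SW_def by linarith
  moreover have "2 * SV x0 = int (card V * (card V + 1))" using x0(3) unfolding SV_def by linarith
  moreover have "2 * SE x0 + int (card V * (card V + 1)) = int (?N * (?N + 1))"
    using x0(4) unfolding SE_def by linarith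
  ultimately have eq: "2 * cost V E x0 = B" unfolding B_def ce
    by (simp add: algebra_simps)
  have "nu_star V E = cost V E x0"
    by (rule nu_star_eqI[OF g x0(1)]) (use up eq in force)
  then show ?thesis using eq unfolding B_def by simp
qed

lemma inj_img_Inl: "inj (\<lambda>e. Inl ` e :: ('a + 'b) set)"
  by (auto simp: inj_def inj_image_eq_iff)
lemma inj_img_Inr: "inj (\<lambda>e. Inr ` e :: ('a + 'b) set)"
  by (auto simp: inj_def inj_image_eq_iff)

lemma du_simple:
  assumes "simple_graph V1 E1" "simple_graph V2 E2"
  shows "simple_graph (du_V V1 V2) (du_E E1 E2)"
  unfolding simple_graph_def
proof (intro conjI ballI)
  show "finite (du_V V1 V2)" using finV[OF assms(1)] finV[OF assms(2)] unfolding du_V_def by simp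
  fix e assume "e \<in> du_E E1 E2"
  then consider e0 where "e0 \<in> E1" "e = Inl ` e0" | e0 where "e0 \<in> E2" "e = Inr ` e0"
    unfolding du_E_def by auto
  then show "\<exists>u v. u \<in> du_V V1 V2 \<and> v \<in> du_V V1 V2 \<and> u \<noteq> v \<and> e = {u, v}"
  proof cases
    case 1
    obtain u v where "u \<in> V1" "v \<in> V1" "u \<noteq> v" "e0 = {u, v}"
      using assms(1) 1(1) by (rule edgeE)
    then show ?thesis using 1 unfolding du_V_def by (intro exI[of _ "Inl u"] exI[of _ "Inl v"]) simp
  next
    case 2
    obtain u v where "u \<in> V2" "v \<in> V2" "u \<noteq> v" "e0 = {u, v}"
      using assms(2) 2(1) by (rule edgeE)
    then show ?thesis using 2 unfolding du_V_def by (intro exI[of _ "Inr u"] exI[of _ "Inr v"]) simp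
  qed
qed

lemma card_du_V:
  assumes "finite V1" "finite V2"
  shows "card (du_V V1 V2) = card V1 + card V2"
  unfolding du_V_def using assms
  by (subst card_Un_disjoint) (auto simp: card_image)

lemma card_du_E:
  assumes "simple_graph V1 E1" "simple_graph V2 E2"
  shows "card (du_E E1 E2) = card E1 + card E2"
proof -
  have ne1: "\<And>e. e \<in> E1 \<Longrightarrow> e \<noteq> {}" using assms(1) by (auto elim: edgeE)
  have d: "(\<lambda>e. Inl ` e) ` E1 \<inter> (\<lambda>e. Inr ` e) ` E2 = {}"
  proof (rule ccontr)
    assume "(\<lambda>e. Inl ` e) ` E1 \<inter> (\<lambda>e. Inr ` e) ` E2 \<noteq> {}"
    then obtain e e' where ee: "e \<in> E1" "e' \<in> E2" "Inl ` e = (Inr ` e' :: ('a + 'b) set)" by auto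
    then have "e \<noteq> {}" using ne1 by simp
    then obtain a where a: "a \<in> e" by blast
    then have "(Inl a :: 'a + 'b) \<in> Inr ` e'" using ee(3) by blast
    then show False by blast
  qed
  have c1: "card ((\<lambda>e. Inl ` e :: ('a + 'b) set) ` E1) = card E1"
    using card_image[OF inj_on_subset[OF inj_img_Inl subset_UNIV]] .
  have c2: "card ((\<lambda>e. Inr ` e :: ('a + 'b) set) ` E2) = card E2"
    using card_image[OF inj_on_subset[OF inj_img_Inr subset_UNIV]] .
  show ?thesis unfolding du_E_def
    using finE[OF assms(1)] finE[OF assms(2)] d
    by (subst card_Un_disjoint) (simp_all add: c1 c2)
qed

lemma deg_Inl:
  assumes "simple_graph V2 E2"
  shows "card {e \<in> du_E E1 E2. Inl v \<in> e} = card {e\<in>E1. v \<in> e}"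
proof -
  have "{e \<in> du_E E1 E2. Inl v \<in> e} = (\<lambda>e. Inl ` e) ` {e\<in>E1. v \<in> e}"
    unfolding du_E_def by auto
  then show ?thesis using card_image[OF inj_on_subset[OF inj_img_Inl, of "{e\<in>E1. v \<in> e}"]] by simp
qed

lemma deg_Inr:
  shows "card {e \<in> du_E E1 E2. Inr v \<in> e} = card {e\<in>E2. v \<in> e}"
proof -
  have "{e \<in> du_E E1 E2. Inr v \<in> e} = (\<lambda>e. Inr ` e) ` {e\<in>E2. v \<in> e}"
    unfolding du_E_def by auto
  then show ?thesis using card_image[OF inj_on_subset[OF inj_img_Inr, of "{e\<in>E2. v \<in> e}"]] by simp
qed

lemma hs_reg:
  assumes "simple_graph V E" "regular V E r"
  shows "int r * int (card V) = 2 * int (card E)"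
  using handshake[OF assms(1)] assms(2) unfolding regular_def by (simp add: mult.commute)

lemma nu_reg:
  assumes g: "simple_graph V E" and rg: "regular V E r"
  shows "2 * nu_star V E = 2 * (int ((card V + card E) * (card V + card E + 1)) - int (card V * (card V + 1)))
     - int r * int (card V * (card V + 1))"
  using nu_star_two[OF g order_refl, of r r] rg unfolding regular_def by simp

theorem theorem5:
  fixes V1 :: "'a set" and E1 :: "'a set set" and V2 :: "'b set" and E2 :: "'b set set"
    and r1 r2 :: nat
  assumes "simple_graph V1 E1" and "regular V1 E1 r1"
    and "simple_graph V2 E2" and "regular V2 E2 r2"
    and "r1 > r2"
  shows "nu_star (du_V V1 V2) (du_E E1 E2)
           = nu_star V1 E1 + nu_star V2 E2
             + 2 * int (card E1) * (int (card V2) + int (card E2))"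
proof -
  have fV1: "finite V1" "finite V2" using assms(1,3) by (simp_all add: finV)
  have g: "simple_graph (du_V V1 V2) (du_E E1 E2)" using du_simple assms by blast
  have W: "Inl ` V1 \<subseteq> du_V V1 V2" unfolding du_V_def by auto
  have d1: "card {e \<in> du_E E1 E2. v \<in> e} = r1" if "v \<in> Inl ` V1" for v
    using that deg_Inl[OF assms(3), of E1] assms(2) unfolding regular_def by auto
  have d2: "card {e \<in> du_E E1 E2. v \<in> e} = r2" if "v \<in> du_V V1 V2 - Inl ` V1" for v
    using that deg_Inr[of E1 E2] assms(4) unfolding regular_def du_V_def by auto
  have cW: "card (Inl ` V1 :: ('a + 'b) set) = card V1" by (simp add: card_image)
  have U: "2 * nu_star (du_V V1 V2) (du_E E1 E2) =
     2 * (int ((card V1 + card V2 + (card E1 + card E2)) * (card V1 + card V2 + (card E1 + card E2) + 1))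
       - int ((card V1 + card V2) * (card V1 + card V2 + 1)))
     - (int r1 - int r2) * int (card V1 * (card V1 + 1)) - int r2 * int ((card V1 + card V2) * (card V1 + card V2 + 1))"
    using nu_star_two[OF g W d1 d2] assms(5) cW card_du_V[OF fV1] card_du_E[OF assms(1,3)] by simp
  have N1: "2 * nu_star V1 E1 = 2 * (int ((card V1 + card E1) * (card V1 + card E1 + 1)) - int (card V1 * (card V1 + 1)))
     - int r1 * int (card V1 * (card V1 + 1))" using nu_reg assms(1,2) .
  have N2: "2 * nu_star V2 E2 = 2 * (int ((card V2 + card E2) * (card V2 + card E2 + 1)) - int (card V2 * (card V2 + 1)))
     - int r2 * int (card V2 * (card V2 + 1))" using nu_reg assms(3,4) .
  have h1: "int r1 * int (card V1) = 2 * int (card E1)" using hs_reg assms(1,2) .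
  have h2: "int r2 * int (card V2) = 2 * int (card E2)" using hs_reg assms(3,4) .
  define p1 where "p1 = int (card V1)"
  define p2 where "p2 = int (card V2)"
  define q1 where "q1 = int (card E1)"
  define q2 where "q2 = int (card E2)"
  define R1 where "R1 = int r1"
  define R2 where "R2 = int r2"
  have U': "2 * nu_star (du_V V1 V2) (du_E E1 E2) = 2 * ((p1+p2+q1+q2)*(p1+p2+q1+q2+1) - (p1+p2)*(p1+p2+1))
     - (R1 - R2) * (p1*(p1+1)) - R2 * ((p1+p2)*(p1+p2+1))"
    using U unfolding p1_def p2_def q1_def q2_def R1_def R2_def by (simp add: algebra_simps)
  have N1': "2 * nu_star V1 E1 = 2 * ((p1+q1)*(p1+q1+1) - p1*(p1+1)) - R1 * (p1*(p1+1))"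
    using N1 unfolding p1_def q1_def R1_def by (simp add: algebra_simps)
  have N2': "2 * nu_star V2 E2 = 2 * ((p2+q2)*(p2+q2+1) - p2*(p2+1)) - R2 * (p2*(p2+1))"
    using N2 unfolding p2_def q2_def R2_def by (simp add: algebra_simps)
  have h1': "R1 * p1 = 2 * q1" using h1 unfolding R1_def p1_def q1_def .
  have h2': "R2 * p2 = 2 * q2" using h2 unfolding R2_def p2_def q2_def .
  have key: "2 * ((p1+p2+q1+q2)*(p1+p2+q1+q2+1) - (p1+p2)*(p1+p2+1))
     - (R1 - R2) * (p1*(p1+1)) - R2 * ((p1+p2)*(p1+p2+1))
     = 2 * ((p1+q1)*(p1+q1+1) - p1*(p1+1)) - R1 * (p1*(p1+1))
     + (2 * ((p2+q2)*(p2+q2+1) - p2*(p2+1)) - R2 * (p2*(p2+1)))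
     + 2 * (2 * q1 * (p2 + q2))"
    using h1' h2' by algebra
  have X: "2 * nu_star (du_V V1 V2) (du_E E1 E2) = 2 * nu_star V1 E1 + 2 * nu_star V2 E2 + 2 * (2 * q1 * (p2 + q2))"
    by (simp only: U' N1' N2' key)
  have "nu_star (du_V V1 V2) (du_E E1 E2) = nu_star V1 E1 + nu_star V2 E2 + 2 * q1 * (p2 + q2)"
    using X by linarith
  then show ?thesis unfolding p2_def q1_def q2_def .
qed

end
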